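(* For every cache size $k\ge 1$, there is a deterministic online paging algorithm for the discard-predictions setup that is $(1,k-1,1)$-competitive. That is, there is a constant $b$ (possibly depending on $k$) such that for every request sequence $I$ and every prediction vector $p$, the number of page faults of the algorithm satisfies $\mathrm{ALG}(I,p)\le \mathrm{OPT}(I)+(k-1)\,\eta_0(p,p^* )+\eta_1(p,p^* )+b$.
   Context: Paging: there is a universe $U$ of pages and a cache holding at most $k$ pages, initially empty. Requests $r_1,\dots,r_n\in U$ arrive online. If the requested page is not in the cache (a page fault), it must be loaded into the cache, evicting some cached page if the cache already holds $k$ pages. The cost of an algorithm is its number of page faults. An online algorithm decides evictions without knowing future requests; $\mathrm{OPT}(I)$ is the minimum cost of an offline algorithm on request sequence $I$. Along with each request $r_i$ the online algorithm receives a prediction bit $p_i\in\{0,1\}$ (which may be arbitrary). Given the ground truth vector $p^*\in\{0,1\}^n$, define for $h\in\{0,1\}$: $\eta_h(p,p^* )=|\{i\in[n] : p_i=h,\ p_i^*=1-h\}|$. An algorithm is $(\alpha,\beta,\gamma)$-competitive if there is a constant $b$ (possibly depending on $k$) such that for every instance $I$ and all predictions $p$, $\mathrm{ALG}(I,p)\le \alpha\,\mathrm{OPT}(I)+\beta\,\eta_0(p,p^* )+\gamma\,\eta_1(p,p^* )+b$ (for randomized algorithms, $\mathrm{ALG}(I,p)$ is the expected cost). Discard-predictions setup: fix the optimal offline algorithm LFD, which on a fault with full cache evicts a cached page that is never requested again if one exists, and otherwise the cached page whose next request is furthest in the future (ties broken by a fixed rule). The ground truth is $p_i^*=0$ if LFD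 keeps page $r_i$ in its cache until the next request to $r_i$ (or until the end of the sequence if there is no further request), and $p_i^*=1$ if LFD evicts $r_i$ before it is requested again. *)

theory Defs
  imports Complex_Main
begin

text \<open>A deterministic online algorithm is a policy that, on a fault with a full cache,
  names the page to evict. It sees the history of (request, prediction bit) pairs
  up to and including the current one, and the current cache content (which is
  itself determined by the history). Prediction bit True means 1, False means 0.
  If the policy names a page that is not cached, a fixed cached page is evicted
  instead (this is still a deterministic online algorithm).\<close>

type_synonym 'a policy = "('a \<times> bool) list \<Rightarrow> 'a set \<Rightarrow> 'a"

definition alg_step :: "'a policy \<Rightarrow> nat \<Rightarrow> ('a \<times> bool) list \<Rightarrow> 'a set \<Rightarrow> 'a \<Rightarrow> 'a set" where
  "alg_step pol k h C r =
     (if r \<in> C then C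
      else if card C < k then insert r C
      else (let v = (if pol h C \<in> C then pol h C else (SOME x. x \<in> C))
            in insert r (C - {v})))"

text \<open>Cache of the online algorithm before serving request number t (0-indexed).\<close>
primrec alg_cache :: "'a policy \<Rightarrow> nat \<Rightarrow> ('a \<times> bool) list \<Rightarrow> nat \<Rightarrow> 'a set" where
  "alg_cache pol k xs 0 = {}"
| "alg_cache pol k xs (Suc t) =
     alg_step pol k (take (Suc t) xs) (alg_cache pol k xs t) (fst (xs ! t))"

definition alg_cost :: "'a policy \<Rightarrow> nat \<Rightarrow> ('a \<times> bool) list \<Rightarrow> nat" where
  "alg_cost pol k xs = card {t. t < length xs \<and> fst (xs ! t) \<notin> alg_cache pol k xs t}"

text \<open>A feasible offline schedule: C t is the cache before request t; after serving
  request t the cache contains it, has at most k pages and only the requested page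
  may have been loaded.\<close>

definition feasible_schedule :: "nat \<Rightarrow> 'a list \<Rightarrow> (nat \<Rightarrow> 'a set) \<Rightarrow> bool" where
  "feasible_schedule k I C \<longleftrightarrow> C 0 = {} \<and>
     (\<forall>t < length I. I ! t \<in> C (Suc t) \<and> C (Suc t) \<subseteq> insert (I ! t) (C t)
                      \<and> card (C (Suc t)) \<le> k)"

definition schedule_cost :: "'a list \<Rightarrow> (nat \<Rightarrow> 'a set) \<Rightarrow> nat" where
  "schedule_cost I C = card {t. t < length I \<and> I ! t \<notin> C t}"

definition opt_cost :: "nat \<Rightarrow> 'a list \<Rightarrow> nat" where
  "opt_cost k I = (LEAST c. \<exists>C. feasible_schedule k I C \<and> c = schedule_cost I C)"

definition next_req :: "'a list \<Rightarrow> nat \<Rightarrow> 'a \<Rightarrow> nat" where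
  "next_req I i q = (LEAST j. i < j \<and> j < length I \<and> I ! j = q)"

definition lfd_cands :: "'a list \<Rightarrow> nat \<Rightarrow> 'a set \<Rightarrow> 'a set" where
  "lfd_cands I i C =
    (let N = {q \<in> C. \<forall>j. i < j \<and> j < length I \<longrightarrow> I ! j \<noteq> q} in
     if N \<noteq> {} then N
     else {q \<in> C. \<forall>q' \<in> C. next_req I i q' \<le> next_req I i q})"

definition lfd_step :: "('a list \<Rightarrow> nat \<Rightarrow> 'a set \<Rightarrow> 'a) \<Rightarrow> nat \<Rightarrow> 'a list \<Rightarrow> nat \<Rightarrow> 'a set \<Rightarrow> 'a set" where
  "lfd_step tie k I i C =
     (if I ! i \<in> C then C
      else if card C < k then insert (I ! i) C
      else insert (I ! i) (C - {tie I i (lfd_cands I i C)}))"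

primrec lfd_cache :: "('a list \<Rightarrow> nat \<Rightarrow> 'a set \<Rightarrow> 'a) \<Rightarrow> nat \<Rightarrow> 'a list \<Rightarrow> nat \<Rightarrow> 'a set" where
  "lfd_cache tie k I 0 = {}"
| "lfd_cache tie k I (Suc t) = lfd_step tie k I t (lfd_cache tie k I t)"

text \<open>Ground truth bit for request i (True = 1): LFD evicts I!i after serving it
  and before it is requested again (or before the end of the sequence).\<close>
definition pstar :: "('a list \<Rightarrow> nat \<Rightarrow> 'a set \<Rightarrow> 'a) \<Rightarrow> nat \<Rightarrow> 'a list \<Rightarrow> nat \<Rightarrow> bool" where
  "pstar tie k I i \<longleftrightarrow>
     (\<exists>t. i < t \<and> t \<le> length I \<and> I ! i \<notin> lfd_cache tie k I t \<and>
          (\<forall>j. i < j \<and> j < t \<longrightarrow> I ! j \<noteq> I ! i))"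

definition eta :: "bool \<Rightarrow> bool list \<Rightarrow> (nat \<Rightarrow> bool) \<Rightarrow> nat" where
  "eta h p ps = card {i. i < length p \<and> p ! i = h \<and> ps i = (\<not> h)}"

end

theory Submission
  imports Defs
begin
definition movs :: "nat \<Rightarrow> 'a \<Rightarrow> 'a set \<Rightarrow> 'a set set" where
  "movs k r X = {Y. r \<in> Y \<and> Y \<subseteq> insert r X \<and> card Y \<le> k \<and> finite Y}"

primrec W :: "nat \<Rightarrow> 'a list \<Rightarrow> nat \<Rightarrow> 'a set \<Rightarrow> nat" where
  "W k I 0 X = 0"
| "W k I (Suc m) X = (if I ! (length I - Suc m) \<in> X then 0 else 1)
     + Inf ((\<lambda>Y. W k I m Y) ` movs k (I ! (length I - Suc m)) X)"

definition V :: "nat \<Rightarrow> 'a list \<Rightarrow> nat \<Rightarrow> 'a set \<Rightarrow> nat" where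
  "V k I t X = W k I (length I - t) X"

lemma V_end: "length I \<le> t \<Longrightarrow> V k I t X = 0"
  by (simp add: V_def)

lemma V_unf: "t < length I \<Longrightarrow> V k I t X = (if I!t \<in> X then 0 else 1)
   + Inf ((\<lambda>Y. V k I (Suc t) Y) ` movs k (I!t) X)"
proof -
  assume t: "t < length I"
  have e: "length I - t = Suc (length I - Suc t)" using t by simp
  have e2: "length I - Suc (length I - Suc t) = t" using t by simp
  show ?thesis unfolding V_def e W.simps e2 ..
qed

lemma V_le: "t < length I \<Longrightarrow> Y \<in> movs k (I!t) X \<Longrightarrow>
   V k I t X \<le> (if I!t \<in> X then 0 else 1) + V k I (Suc t) Y"
  by (simp add: V_unf cInf_lower)

lemma movs_ne: "k \<ge> 1 \<Longrightarrow> {r} \<in> movs k r X"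
  by (simp add: movs_def)

lemma V_att: "t < length I \<Longrightarrow> k \<ge> 1 \<Longrightarrow> \<exists>Y \<in> movs k (I!t) X.
   V k I t X = (if I!t \<in> X then 0 else 1) + V k I (Suc t) Y"
proof -
  assume t: "t < length I" and k: "k \<ge> 1"
  have "(\<lambda>Y. V k I (Suc t) Y) ` movs k (I!t) X \<noteq> {}" using movs_ne[OF k, of "I!t" X] by blast
  from Inf_nat_def1[OF this] obtain Y where "Y \<in> movs k (I!t) X"
    "Inf ((\<lambda>Y. V k I (Suc t) Y) ` movs k (I!t) X) = V k I (Suc t) Y" by auto
  thus ?thesis using t by (auto simp: V_unf)
qed

lemma V_mono: "k \<ge> 1 \<Longrightarrow> X \<subseteq> Y \<Longrightarrow> V k I t Y \<le> V k I t X"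
proof (cases "t < length I")
  case True
  assume k: "k \<ge> 1" and XY: "X \<subseteq> Y"
  from V_att[OF True k] obtain Y' where Y': "Y' \<in> movs k (I!t) X"
    "V k I t X = (if I!t \<in> X then 0 else 1) + V k I (Suc t) Y'" by blast
  have "Y' \<in> movs k (I!t) Y" using Y'(1) XY by (auto simp: movs_def)
  from V_le[OF True this] Y'(2) XY show ?thesis by (auto split: if_splits)
qed (simp add: V_end)

lemma V_remove: "k \<ge> 1 \<Longrightarrow> V k I t (Y - {f}) \<le> 1 + V k I t Y"
proof (induction "length I - t" arbitrary: t Y)
  case 0
  then show ?case by (simp add: V_end)
next
  case (Suc m)
  hence t: "t < length I" by simp
  from V_att[OF t Suc.prems] obtain Y' where Y': "Y' \<in> movs k (I!t) Y"
    "V k I t Y = (if I!t \<in> Y then 0 else 1) + V k I (Suc t) Y'" by blast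
  show ?case
  proof (cases "I!t = f")
    case True
    have "Y' \<in> movs k (I!t) (Y - {f})" using Y'(1) True by (auto simp: movs_def)
    from V_le[OF t this] Y'(2) show ?thesis by (auto split: if_splits)
  next
    case False
    have m: "Y' - {f} \<in> movs k (I!t) (Y - {f})" using Y'(1) False
      by (auto simp: movs_def intro: le_trans[OF card_Diff1_le])
    have ih: "V k I (Suc t) (Y' - {f}) \<le> 1 + V k I (Suc t) Y'"
      using Suc(1)[of "Suc t" Y'] Suc(2) Suc.prems by simp
    from V_le[OF t m] Y'(2) ih False show ?thesis by (auto split: if_splits)
  qed
qed

definition nxt :: "'a list \<Rightarrow> nat \<Rightarrow> 'a \<Rightarrow> nat" where
  "nxt I t q = (if \<exists>j. t \<le> j \<and> j < length I \<and> I!j = q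
                then LEAST j. t \<le> j \<and> j < length I \<and> I!j = q else length I)"

lemma nxt_le: "nxt I t q \<le> length I"
proof (cases "\<exists>j. t \<le> j \<and> j < length I \<and> I!j = q")
  case True
  then obtain j where j: "t \<le> j \<and> j < length I \<and> I!j = q" by blast
  have "(LEAST j. t \<le> j \<and> j < length I \<and> I!j = q) \<le> j" by (rule Least_le) (rule j)
  then show ?thesis using True j by (simp add: nxt_def)
next
  case False
  have "nxt I t q = length I" unfolding nxt_def by (rule if_not_P[OF False])
  then show ?thesis by simp
qed

lemma nxt_skip: "I!t \<noteq> q \<Longrightarrow> nxt I (Suc t) q = nxt I t q"
proof -
  assume ne: "I!t \<noteq> q"
  have eq: "\<And>j. (Suc t \<le> j \<and> j < length I \<and> I!j = q) = (t \<le> j \<and> j < length I \<and> I!j = q)"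
    using ne by (force simp: Suc_le_eq le_less)
  show ?thesis unfolding nxt_def eq ..
qed

lemma nxt_here: "t < length I \<Longrightarrow> nxt I t (I!t) = t"
proof -
  assume t: "t < length I"
  have "(LEAST j. t \<le> j \<and> j < length I \<and> I!j = I!t) = t"
    by (rule Least_equality) (use t in auto)
  thus ?thesis using t unfolding nxt_def by auto
qed

lemma nxt_at: "nxt I t q \<le> t \<Longrightarrow> t < length I \<Longrightarrow> I!t = q"
proof -
  assume a: "nxt I t q \<le> t" and t: "t < length I"
  show ?thesis
  proof (cases "\<exists>j. t \<le> j \<and> j < length I \<and> I!j = q")
    case True
    let ?j = "LEAST j. t \<le> j \<and> j < length I \<and> I!j = q"
    have "t \<le> ?j \<and> ?j < length I \<and> I!?j = q" using True by (metis (mono_tags, lifting) LeastI)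
    moreover have "?j \<le> t" using a True by (simp add: nxt_def)
    ultimately have "?j = t" by simp
    with \<open>t \<le> ?j \<and> ?j < length I \<and> I!?j = q\<close> show ?thesis by simp
  next
    case False
    have "nxt I t q = length I" unfolding nxt_def by (rule if_not_P[OF False])
    then show ?thesis using a t by simp
  qed
qed

lemma V_swap: "k \<ge> 1 \<Longrightarrow> e \<notin> Z \<Longrightarrow> f \<notin> Z \<Longrightarrow> e \<noteq> f \<Longrightarrow> nxt I t e \<le> nxt I t f \<Longrightarrow>
  V k I t (insert e Z) \<le> V k I t (insert f Z)"
proof (induction "length I - t" arbitrary: t Z)
  case 0
  then show ?case by (simp add: V_end)
next
  case (Suc m)
  hence t: "t < length I" by simp
  from V_att[OF t Suc.prems(1)] obtain Y' where Y': "Y' \<in> movs k (I!t) (insert f Z)"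
    "V k I t (insert f Z) = (if I!t \<in> insert f Z then 0 else 1) + V k I (Suc t) Y'" by blast
  show ?case
  proof (cases "I!t = f")
    case True
    have "nxt I t e \<le> t" using Suc.prems(5) nxt_here[OF t] True by simp
    from nxt_at[OF this t] True Suc.prems(4) show ?thesis by simp
  next
    case nf: False
    show ?thesis
    proof (cases "I!t = e")
      case True
      show ?thesis
      proof (cases "f \<in> Y'")
        case False
        have "Y' \<in> movs k (I!t) (insert e Z)" using Y'(1) False True by (auto simp: movs_def)
        from V_le[OF t this] Y'(2) True nf Suc.prems show ?thesis by (auto split: if_splits)
      next
        case fY: True
        have m: "Y' - {f} \<in> movs k (I!t) (insert e Z)" using Y'(1) True nf
          by (auto simp: movs_def intro: le_trans[OF card_Diff1_le])
        have "V k I (Suc t) (Y' - {f}) \<le> 1 + V k I (Suc t) Y'" by (rule V_remove[OF Suc.prems(1)])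
        with V_le[OF t m] Y'(2) True Suc.prems show ?thesis by (auto split: if_splits)
      qed
    next
      case ne: False
      show ?thesis
      proof (cases "f \<in> Y'")
        case False
        have "Y' \<in> movs k (I!t) (insert e Z)" using Y'(1) False by (auto simp: movs_def)
        from V_le[OF t this] Y'(2) ne nf show ?thesis by (auto split: if_splits)
      next
        case fY: True
        define Z' where "Z' = Y' - {f}"
        have eY: "e \<notin> Y'" using Y'(1) ne Suc.prems by (auto simp: movs_def)
        have Y'e: "Y' = insert f Z'" using fY Z'_def by auto
        have "finite Y'" using Y'(1) by (simp add: movs_def)
        hence c0: "card Y' > 0" using fY by (auto simp: card_gt_0_iff)
        have m: "insert e Z' \<in> movs k (I!t) (insert e Z)" using Y'(1) ne nf eY fY c0
          unfolding Z'_def movs_def by (auto simp: card_insert_if)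
        have ih: "V k I (Suc t) (insert e Z') \<le> V k I (Suc t) (insert f Z')"
          apply (rule Suc(1)[of "Suc t"])
          using Suc(2) Suc.prems eY nxt_skip[OF ne] nxt_skip[OF nf] by (auto simp: Z'_def)
        from V_le[OF t m] Y'(2) ih ne nf Y'e show ?thesis by (auto split: if_splits)
      qed
    qed
  qed
qed

lemma card_step: "t < n \<Longrightarrow> card {t'. t \<le> t' \<and> t' < n \<and> P t'} =
   (if P t then 1 else 0) + card {t'. Suc t \<le> t' \<and> t' < n \<and> P t'}"
proof -
  assume t: "t < n"
  let ?S = "{t'. Suc t \<le> t' \<and> t' < n \<and> P t'}"
  have fin: "finite ?S" by (rule finite_subset[of _ "{..<n}"]) auto
  have "{t'. t \<le> t' \<and> t' < n \<and> P t'} = (if P t then insert t ?S else ?S)"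
    using t by (auto simp: Suc_le_eq le_less)
  thus ?thesis using fin by simp
qed

lemma feas_fin: "feasible_schedule k I C \<Longrightarrow> t \<le> length I \<Longrightarrow> finite (C t)"
proof (induction t)
  case 0
  then show ?case by (simp add: feasible_schedule_def)
next
  case (Suc t)
  hence "finite (C t)" by simp
  moreover have "C (Suc t) \<subseteq> insert (I!t) (C t)" using Suc.prems by (simp add: feasible_schedule_def)
  ultimately show ?case using finite_subset by blast
qed

lemma sched_lb: "feasible_schedule k I C \<Longrightarrow> t \<le> length I \<Longrightarrow>
   V k I t (C t) \<le> card {t'. t \<le> t' \<and> t' < length I \<and> I!t' \<notin> C t'}"
proof (induction "length I - t" arbitrary: t)
  case 0
  then show ?case by (simp add: V_end)
next
  case (Suc m)
  hence t: "t < length I" by simp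
  have "C (Suc t) \<in> movs k (I!t) (C t)"
    using Suc.prems t feas_fin[OF Suc.prems(1), of "Suc t"] by (auto simp: feasible_schedule_def movs_def)
  from V_le[OF t this] have "V k I t (C t) \<le> (if I!t \<in> C t then 0 else 1) + V k I (Suc t) (C (Suc t))" .
  moreover have "V k I (Suc t) (C (Suc t)) \<le> card {t'. Suc t \<le> t' \<and> t' < length I \<and> I!t' \<notin> C t'}"
    using Suc t by simp
  ultimately show ?case using card_step[OF t, of "\<lambda>t'. I!t' \<notin> C t'"] by (cases "I!t \<in> C t") auto
qed

lemma opt_lb: "k \<ge> 1 \<Longrightarrow> V k I 0 {} \<le> opt_cost k I"
proof -
  assume k: "k \<ge> 1"
  define C0 where "C0 = (\<lambda>t. if t = 0 then {} else {I!(t-1)})"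
  have "feasible_schedule k I C0" using k by (auto simp: feasible_schedule_def C0_def)
  hence "\<exists>c C. feasible_schedule k I C \<and> c = schedule_cost I C" by blast
  hence "\<exists>C. feasible_schedule k I C \<and> opt_cost k I = schedule_cost I C"
    unfolding opt_cost_def by (rule LeastI_ex[where P = "\<lambda>c. \<exists>C. feasible_schedule k I C \<and> c = schedule_cost I C", OF exE]) blast+
  then obtain C where C: "feasible_schedule k I C" "opt_cost k I = schedule_cost I C" by blast
  have "C 0 = {}" using C(1) by (simp add: feasible_schedule_def)
  with sched_lb[OF C(1), of 0] C(2) show ?thesis by (simp add: schedule_cost_def)
qed

locale pg =
  fixes k :: nat and tie :: "'a list \<Rightarrow> nat \<Rightarrow> 'a set \<Rightarrow> 'a" and I :: "'a list"
  assumes k1: "k \<ge> 1" and tie_in: "\<And>I i S. S \<noteq> {} \<Longrightarrow> finite S \<Longrightarrow> tie I i S \<in> S"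
begin

abbreviation L where "L t \<equiv> lfd_cache tie k I t"

lemma cands: "finite X \<Longrightarrow> X \<noteq> {} \<Longrightarrow> lfd_cands I t X \<noteq> {} \<and> lfd_cands I t X \<subseteq> X"
proof -
  assume f: "finite X" and ne: "X \<noteq> {}"
  have "Max (next_req I t ` X) \<in> next_req I t ` X" using f ne by simp
  then obtain q where q: "q \<in> X" "next_req I t q = Max (next_req I t ` X)" by auto
  have "\<forall>q'\<in>X. next_req I t q' \<le> next_req I t q" using q f by simp
  thus ?thesis using q unfolding lfd_cands_def Let_def by auto
qed

lemma L_step: "L (Suc t) = (if I!t \<in> L t then L t else if card (L t) < k then insert (I!t) (L t)
   else insert (I!t) (L t - {tie I t (lfd_cands I t (L t))}))"
  by (simp only: lfd_cache.simps lfd_step_def)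

lemma L_inv: "finite (L t) \<and> card (L t) \<le> k"
proof (induction t)
  case 0
  then show ?case by simp
next
  case (Suc t)
  have f: "finite (L t)" and c: "card (L t) \<le> k" using Suc by auto
  show ?case
  proof (cases "I!t \<in> L t")
    case True
    then have "L (Suc t) = L t" by (simp add: lfd_step_def)
    then show ?thesis using f c by simp
  next
    case nin: False
    show ?thesis
    proof (cases "card (L t) < k")
      case True
      then have "L (Suc t) = insert (I!t) (L t)" using nin by (simp add: lfd_step_def)
      then show ?thesis using f True by (simp add: card_insert_if)
    next
      case False
      hence ne: "L t \<noteq> {}" using k1 by auto
      let ?v = "tie I t (lfd_cands I t (L t))"
      have Ls: "L (Suc t) = insert (I!t) (L t - {?v})" using nin False by (simp add: lfd_step_def)
      have cc: "lfd_cands I t (L t) \<noteq> {}" "lfd_cands I t (L t) \<subseteq> L t" using cands[OF f ne] by auto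
      have "?v \<in> lfd_cands I t (L t)" using tie_in[OF cc(1) finite_subset[OF cc(2) f]] .
      hence "?v \<in> L t" using cc(2) by blast
      hence "card (L t - {?v}) = card (L t) - 1" using f by simp
      moreover have "card (insert (I!t) (L t - {?v})) \<le> Suc (card (L t - {?v}))" by (simp add: card_insert_if f)
      moreover have "card (L t) \<ge> 1" using ne f by (simp add: Suc_le_eq card_gt_0_iff)
      moreover have "finite (insert (I!t) (L t - {?v}))" using f by simp
      ultimately show ?thesis using c Ls by simp
    qed
  qed
qed

lemma L_victim: "\<not> card (L t) < k \<Longrightarrow> tie I t (lfd_cands I t (L t)) \<in> L t"
proof -
  assume a: "\<not> card (L t) < k"
  have f: "finite (L t)" using L_inv[of t] by simp
  have ne: "L t \<noteq> {}" using a k1 by auto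
  have c: "lfd_cands I t (L t) \<noteq> {}" "lfd_cands I t (L t) \<subseteq> L t" using cands[OF f ne] by auto
  have "finite (lfd_cands I t (L t))" using finite_subset[OF c(2) f] .
  from tie_in[OF c(1) this] c(2) show ?thesis by blast
qed

lemma L_sub: "L (Suc t) \<subseteq> insert (I!t) (L t)"
  unfolding L_step by auto

lemma L_has: "I!t \<in> L (Suc t)"
  unfolding L_step by auto

lemma L_req: "q \<in> L t \<Longrightarrow> \<exists>j<t. I!j = q"
proof (induction t)
  case 0
  then show ?case by simp
next
  case (Suc t)
  show ?case
  proof (cases "q = I!t")
    case True
    then show ?thesis by blast
  next
    case False
    hence "q \<in> L t" using Suc.prems L_sub[of t] by blast
    then obtain j where "j < t" "I!j = q" using Suc.IH by blast
    then show ?thesis using less_SucI by blast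
  qed
qed

lemma lfd_far: "finite X \<Longrightarrow> X \<noteq> {} \<Longrightarrow> u \<in> X \<Longrightarrow>
   nxt I (Suc t) u \<le> nxt I (Suc t) (tie I t (lfd_cands I t X))"
proof -
  assume f: "finite X" and ne: "X \<noteq> {}" and u: "u \<in> X"
  let ?v = "tie I t (lfd_cands I t X)"
  have c: "lfd_cands I t X \<noteq> {}" "lfd_cands I t X \<subseteq> X" using cands[OF f ne] by auto
  have vc: "?v \<in> lfd_cands I t X" using tie_in[OF c(1) finite_subset[OF c(2) f]] .
  let ?N = "{q \<in> X. \<forall>j. t < j \<and> j < length I \<longrightarrow> I ! j \<noteq> q}"
  show ?thesis
  proof (cases "?N \<noteq> {}")
    case True
    have "lfd_cands I t X = ?N"
      unfolding lfd_cands_def Let_def by (rule if_P[OF True])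
    hence "?v \<in> ?N" using vc by simp
    hence "\<not> (\<exists>j. Suc t \<le> j \<and> j < length I \<and> I!j = ?v)" by (auto simp: Suc_le_eq)
    hence "nxt I (Suc t) ?v = length I" unfolding nxt_def by (rule if_not_P)
    thus ?thesis using nxt_le[of I "Suc t" u] by simp
  next
    case False
    have "lfd_cands I t X = {q \<in> X. \<forall>q'\<in>X. next_req I t q' \<le> next_req I t q}"
      unfolding lfd_cands_def Let_def by (rule if_not_P[OF False])
    hence vm: "\<forall>q'\<in>X. next_req I t q' \<le> next_req I t ?v" "?v \<in> X"
      using vc by auto
    have ex: "\<exists>j. Suc t \<le> j \<and> j < length I \<and> I!j = q" if "q \<in> X" for q
      using False that by (auto simp: Suc_le_eq)
    have eq: "nxt I (Suc t) q = next_req I t q" if "q \<in> X" for q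
      using ex[OF that] unfolding nxt_def next_req_def by (simp add: Suc_le_eq)
    show ?thesis using vm u eq by simp
  qed
qed

lemma L_opt: "t \<le> length I \<Longrightarrow> card {t'. t \<le> t' \<and> t' < length I \<and> I!t' \<notin> L t'} \<le> V k I t (L t)"
proof (induction "length I - t" arbitrary: t)
  case 0
  hence e: "{t'. t \<le> t' \<and> t' < length I \<and> I!t' \<notin> L t'} = {}" by auto
  show ?case unfolding e by simp
next
  case (Suc m)
  hence t: "t < length I" by simp
  let ?X = "L t" and ?r = "I!t"
  from V_att[OF t k1] obtain Y' where Y': "Y' \<in> movs k ?r ?X"
    "V k I t ?X = (if ?r \<in> ?X then 0 else 1) + V k I (Suc t) Y'" by blast
  have fX: "finite ?X" "card ?X \<le> k" using L_inv[of t] by auto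
  have claim: "V k I (Suc t) (L (Suc t)) \<le> V k I (Suc t) Y'"
  proof (cases "?r \<in> ?X \<or> card ?X < k")
    case True
    hence "Y' \<subseteq> L (Suc t)" using Y'(1) L_step[of t] by (auto simp: movs_def)
    then show ?thesis by (rule V_mono[OF k1])
  next
    case False
    let ?v = "tie I t (lfd_cands I t ?X)"
    have rX: "?r \<notin> ?X" and cX: "card ?X = k" using False fX by auto
    have vX: "?v \<in> ?X" using L_victim False by blast
    have Ls: "L (Suc t) = insert ?r (?X - {?v})" using L_step[of t] False by auto
    have "card (insert ?r ?X) = Suc k" using rX cX fX by simp
    moreover have "card Y' \<le> k" "Y' \<subseteq> insert ?r ?X" "?r \<in> Y'" using Y'(1) by (auto simp: movs_def)
    moreover have fY': "finite Y'" using Y'(1) by (simp add: movs_def)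
    ultimately have "\<not> insert ?r ?X \<subseteq> Y'"
      using card_mono[OF fY', of "insert ?r ?X"] by linarith
    then obtain u where u: "u \<in> ?X" "u \<notin> Y'" using \<open>?r \<in> Y'\<close> by blast
    have "Y' \<subseteq> insert ?r (?X - {u})" using u \<open>Y' \<subseteq> insert ?r ?X\<close> by auto
    hence m1: "V k I (Suc t) (insert ?r (?X - {u})) \<le> V k I (Suc t) Y'" by (rule V_mono[OF k1])
    show ?thesis
    proof (cases "u = ?v")
      case True
      then show ?thesis using m1 Ls by simp
    next
      case False
      define Z where "Z = insert ?r (?X - {u, ?v})"
      have e1: "insert u Z = insert ?r (?X - {?v})" using u False unfolding Z_def by auto
      have e2: "insert ?v Z = insert ?r (?X - {u})" using vX False unfolding Z_def by auto
      have "nxt I (Suc t) u \<le> nxt I (Suc t) ?v" using lfd_far[OF fX(1) _ u(1)] u by blast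
      hence "V k I (Suc t) (insert u Z) \<le> V k I (Suc t) (insert ?v Z)"
        by (intro V_swap[OF k1]) (use u vX rX False in \<open>auto simp: Z_def\<close>)
      then show ?thesis using m1 e1 e2 Ls by simp
    qed
  qed
  have mm: "m = length I - Suc t" using Suc(2) by simp
  have ih: "card {t'. Suc t \<le> t' \<and> t' < length I \<and> I!t' \<notin> L t'} \<le> V k I (Suc t) (L (Suc t))"
    by (rule Suc(1)[OF mm Suc_leI[OF t]])
  have cs: "card {t'. t \<le> t' \<and> t' < length I \<and> I!t' \<notin> L t'} =
     (if I!t \<notin> L t then 1 else 0) + card {t'. Suc t \<le> t' \<and> t' < length I \<and> I!t' \<notin> L t'}"
    by (rule card_step[OF t])
  have c_eq: "(if I!t \<notin> L t then 1 else (0::nat)) = (if I!t \<in> L t then 0 else 1)" by simp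
  show ?case using cs Y'(2) claim ih c_eq by linarith
qed

end

definition lidx :: "('a \<times> bool) list \<Rightarrow> 'a \<Rightarrow> nat" where
  "lidx h q = Max {j. j < length h \<and> fst (h!j) = q}"

definition pbit :: "('a \<times> bool) list \<Rightarrow> 'a \<Rightarrow> bool" where
  "pbit h q = snd (h ! lidx h q)"

definition mypol :: "'a policy" where
  "mypol h C = (if \<exists>q\<in>C. pbit h q then (SOME q. q \<in> C \<and> pbit h q)
                else (SOME q. q \<in> C \<and> (\<forall>q'\<in>C. lidx h q \<le> lidx h q')))"

lemma argmin_ex: "finite C \<Longrightarrow> C \<noteq> {} \<Longrightarrow> \<exists>q. q \<in> C \<and> (\<forall>q'\<in>C. (f q :: nat) \<le> f q')"
proof -
  assume f: "finite C" and ne: "C \<noteq> {}"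
  have "Min (f ` C) \<in> f ` C" using f ne by simp
  then obtain q where "q \<in> C" "f q = Min (f ` C)" by auto
  thus ?thesis using f by auto
qed

lemma mypol_in: "finite C \<Longrightarrow> C \<noteq> {} \<Longrightarrow> mypol h C \<in> C"
proof -
  assume f: "finite C" and ne: "C \<noteq> {}"
  show ?thesis
  proof (cases "\<exists>q\<in>C. pbit h q")
    case True
    then have "\<exists>q. q \<in> C \<and> pbit h q" by blast
    from someI_ex[OF this] True show ?thesis by (simp add: mypol_def)
  next
    case False
    from someI_ex[OF argmin_ex[OF f ne, of "lidx h"]] False show ?thesis by (simp add: mypol_def)
  qed
qed

lemma mypol_lru: "finite C \<Longrightarrow> C \<noteq> {} \<Longrightarrow> \<not> pbit h (mypol h C) \<Longrightarrow>
   (\<forall>q\<in>C. \<not> pbit h q) \<and> (\<forall>q\<in>C. lidx h (mypol h C) \<le> lidx h q)"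
proof -
  assume f: "finite C" and ne: "C \<noteq> {}" and nb: "\<not> pbit h (mypol h C)"
  show ?thesis
  proof (cases "\<exists>q\<in>C. pbit h q")
    case True
    then have "\<exists>q. q \<in> C \<and> pbit h q" by blast
    from someI_ex[OF this] True nb show ?thesis by (simp add: mypol_def)
  next
    case False
    from someI_ex[OF argmin_ex[OF f ne, of "lidx h"]] False show ?thesis by (simp add: mypol_def)
  qed
qed

lemma as_hit: "r \<in> C \<Longrightarrow> alg_step pol k h C r = C"
  by (simp add: alg_step_def)

lemma as_ins: "r \<notin> C \<Longrightarrow> card C < k \<Longrightarrow> alg_step pol k h C r = insert r C"
  by (simp add: alg_step_def)

lemma as_ev: "r \<notin> C \<Longrightarrow> \<not> card C < k \<Longrightarrow> finite C \<Longrightarrow> C \<noteq> {} \<Longrightarrow>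
   alg_step mypol k h C r = insert r (C - {mypol h C})"
  using mypol_in[of C h] by (simp add: alg_step_def Let_def)

lemma first_drop: "P a \<Longrightarrow> \<not> P b \<Longrightarrow> a \<le> b \<Longrightarrow> \<exists>s. a \<le> s \<and> s < b \<and> P s \<and> \<not> P (Suc s)"
proof (induction b)
  case 0
  then show ?case by simp
next
  case (Suc b)
  show ?case
  proof (cases "P b")
    case True
    then show ?thesis using Suc.prems by (metis le_SucE lessI)
  next
    case False
    hence "a \<le> b" using Suc.prems by (metis le_SucE)
    from Suc.IH[OF Suc.prems(1) False this] show ?thesis using less_SucI by blast
  qed
qed

lemma dec_count: "(\<And>s. a \<le> s \<Longrightarrow> s < b \<Longrightarrow> G (Suc s) \<subseteq> G s) \<Longrightarrow> finite (G a) \<Longrightarrow> a \<le> b \<Longrightarrow>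
  card {s. a \<le> s \<and> s < b \<and> G (Suc s) \<noteq> G s} + card (G b) \<le> card (G a)"
proof (induction b)
  case 0
  then show ?case by simp
next
  case (Suc b)
  note mono = Suc.prems(1) and fa = Suc.prems(2)
  show ?case
  proof (cases "a \<le> b")
    case False
    hence "a = Suc b" using Suc.prems by simp
    then show ?thesis by simp
  next
    case True
    have ih: "card {s. a \<le> s \<and> s < b \<and> G (Suc s) \<noteq> G s} + card (G b) \<le> card (G a)"
      using Suc.IH[OF _ Suc.prems(2) True] Suc.prems(1) by simp
    have fb: "finite (G b)"
    proof -
      have "\<And>m. a + m \<le> b \<Longrightarrow> finite (G (a + m))"
      proof -
        fix m show "a + m \<le> b \<Longrightarrow> finite (G (a + m))"
        proof (induction m)
          case 0 then show ?case using fa by simp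
        next
          case (Suc m)
          have "G (Suc (a + m)) \<subseteq> G (a + m)" using mono[of "a+m"] Suc.prems by simp
          then show ?case using Suc by (auto intro: finite_subset)
        qed
      qed
      from this[of "b - a"] True show ?thesis by simp
    qed
    have sub: "G (Suc b) \<subseteq> G b" using Suc.prems(1)[of b] True by simp
    let ?S = "\<lambda>b. {s. a \<le> s \<and> s < b \<and> G (Suc s) \<noteq> G s}"
    have fS: "finite (?S b)" by (rule finite_subset[of _ "{..<b}"]) auto
    show ?thesis
    proof (cases "G (Suc b) = G b")
      case True
      have "?S (Suc b) = ?S b" using True by (auto simp: less_Suc_eq)
      then show ?thesis using ih True by simp
    next
      case False
      have "?S (Suc b) = insert b (?S b)" using False \<open>a \<le> b\<close> by (auto simp: less_Suc_eq)
      hence "card (?S (Suc b)) = Suc (card (?S b))" using fS by simp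
      moreover have "card (G (Suc b)) < card (G b)" using sub False fb by (simp add: psubset_card_mono)
      ultimately show ?thesis using ih by simp
    qed
  qed
qed

definition lst :: "'a list \<Rightarrow> nat \<Rightarrow> 'a \<Rightarrow> nat" where
  "lst I t q = Max {j. j < t \<and> I!j = q}"

lemma lst_props: "\<exists>j<t. I!j = q \<Longrightarrow> lst I t q < t \<and> I!(lst I t q) = q \<and> (\<forall>j. lst I t q < j \<and> j < t \<longrightarrow> I!j \<noteq> q)"
proof -
  assume ex: "\<exists>j<t. I!j = q"
  let ?S = "{j. j < t \<and> I!j = q}"
  have f: "finite ?S" by (rule finite_subset[of _ "{..<t}"]) auto
  have ne: "?S \<noteq> {}" using ex by auto
  have m: "Max ?S \<in> ?S" using f ne by (rule Max_in)
  have ub: "\<forall>j\<in>?S. j \<le> Max ?S" using f by simp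
  have nr: "\<forall>j. Max ?S < j \<and> j < t \<longrightarrow> I!j \<noteq> q"
  proof (intro allI impI)
    fix j assume j: "Max ?S < j \<and> j < t"
    show "I!j \<noteq> q"
    proof
      assume "I!j = q"
      then have "j \<in> ?S" using j by simp
      then have "j \<le> Max ?S" using ub by blast
      thus False using j by simp
    qed
  qed
  show ?thesis unfolding lst_def using m nr by blast
qed

lemma lst_ge: "j < t \<Longrightarrow> I!j = q \<Longrightarrow> j \<le> lst I t q"
proof -
  assume "j < t" "I!j = q"
  moreover have "finite {j. j < t \<and> I!j = q}" by (rule finite_subset[of _ "{..<t}"]) auto
  ultimately show ?thesis unfolding lst_def by simp
qed

lemma lst_eq: "i < t \<Longrightarrow> I!i = q \<Longrightarrow> (\<forall>j. i < j \<and> j < t \<longrightarrow> I!j \<noteq> q) \<Longrightarrow> lst I t q = i"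
proof -
  assume a: "i < t" "I!i = q" "\<forall>j. i < j \<and> j < t \<longrightarrow> I!j \<noteq> q"
  have "i \<le> lst I t q" using lst_ge a by metis
  moreover have "lst I t q < t" "I!(lst I t q) = q" using lst_props[of t I q] a by blast+
  ultimately show ?thesis using a(3) by (metis le_neq_implies_less)
qed

locale pg2 = pg +
  fixes p :: "bool list"
  assumes len: "length p = length I"
begin

abbreviation xs where "xs \<equiv> zip I p"
abbreviation A where "A t \<equiv> alg_cache mypol k xs t"
abbreviation n where "n \<equiv> length I"

lemma xs_nth: "t < n \<Longrightarrow> xs ! t = (I!t, p!t)"
  using len by simp

lemma A_step: "t < n \<Longrightarrow> A (Suc t) = alg_step mypol k (take (Suc t) xs) (A t) (I!t)"
  using xs_nth by simp

lemma A_inv: "finite (A t) \<and> card (A t) \<le> k"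
proof (induction t)
  case 0
  then show ?case by simp
next
  case (Suc t)
  let ?r = "fst (xs ! t)" and ?h = "take (Suc t) xs"
  have f: "finite (A t)" and c: "card (A t) \<le> k" using Suc by auto
  have e: "A (Suc t) = alg_step mypol k ?h (A t) ?r" by simp
  show ?case
  proof (cases "?r \<in> A t")
    case True
    then show ?thesis using e as_hit f c by metis
  next
    case nin: False
    show ?thesis
    proof (cases "card (A t) < k")
      case True
      then show ?thesis using e as_ins[OF nin True] f by (simp add: card_insert_if)
    next
      case False
      hence ne: "A t \<noteq> {}" using k1 by auto
      have e2: "A (Suc t) = insert ?r (A t - {mypol ?h (A t)})" using e as_ev[OF nin False f ne] by simp
      have "mypol ?h (A t) \<in> A t" using mypol_in[OF f ne] .
      hence "card (A t - {mypol ?h (A t)}) = card (A t) - 1" using f by simp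
      moreover have "card (A t) \<ge> 1" using ne f by (simp add: Suc_le_eq card_gt_0_iff)
      moreover have "card (insert ?r (A t - {mypol ?h (A t)})) \<le> Suc (card (A t - {mypol ?h (A t)}))"
        by (simp add: card_insert_if f)
      ultimately show ?thesis using e2 c f by simp
    qed
  qed
qed

lemma A_sub: "t < n \<Longrightarrow> A (Suc t) \<subseteq> insert (I!t) (A t)"
  unfolding A_step by (auto simp: alg_step_def Let_def)

lemma A_has: "t < n \<Longrightarrow> I!t \<in> A (Suc t)"
  unfolding A_step by (auto simp: alg_step_def Let_def)

lemma A_req: "t \<le> n \<Longrightarrow> q \<in> A t \<Longrightarrow> \<exists>j<t. I!j = q"
proof (induction t)
  case 0
  then show ?case by simp
next
  case (Suc t)
  hence t: "t < n" by simp
  show ?case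
  proof (cases "q = I!t")
    case True
    then show ?thesis by blast
  next
    case False
    hence "q \<in> A t" using Suc.prems A_sub[OF t] by blast
    then obtain j where "j < t" "I!j = q" using Suc.IH t by auto
    then show ?thesis using less_SucI by blast
  qed
qed

lemma A_evict: "t < n \<Longrightarrow> x \<in> A t \<Longrightarrow> x \<notin> A (Suc t) \<Longrightarrow>
   I!t \<notin> A t \<and> \<not> card (A t) < k \<and> x = mypol (take (Suc t) xs) (A t)"
proof -
  assume t: "t < n" and x: "x \<in> A t" "x \<notin> A (Suc t)"
  let ?h = "take (Suc t) xs"
  have f: "finite (A t)" using A_inv by blast
  have nin: "I!t \<notin> A t" using x A_step[OF t] as_hit by metis
  have nl: "\<not> card (A t) < k" using x A_step[OF t] as_ins[OF nin] by auto
  have "A (Suc t) = insert (I!t) (A t - {mypol ?h (A t)})"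
    using A_step[OF t] as_ev[OF nin nl f] x by auto
  hence "x = mypol ?h (A t)" using x by auto
  thus ?thesis using nin nl by simp
qed

lemma A_one: "t < n \<Longrightarrow> x \<in> A t \<Longrightarrow> x \<notin> A (Suc t) \<Longrightarrow> y \<in> A t \<Longrightarrow> y \<notin> A (Suc t) \<Longrightarrow> x = y"
  using A_evict by metis

lemma lidx_eq: "t < n \<Longrightarrow> q \<noteq> I!t \<Longrightarrow> lidx (take (Suc t) xs) q = lst I t q"
proof -
  assume t: "t < n" and q: "q \<noteq> I!t"
  have "{j. j < length (take (Suc t) xs) \<and> fst (take (Suc t) xs ! j) = q} = {j. j < t \<and> I!j = q}"
  proof -
    have l: "length (take (Suc t) xs) = Suc t" using t len by simp
    have "fst (take (Suc t) xs ! j) = I!j" if "j < Suc t" for j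
      using that t xs_nth[of j] by simp
    thus ?thesis using l q by (auto simp: less_Suc_eq)
  qed
  thus ?thesis unfolding lidx_def lst_def by simp
qed

lemma pbit_eq: "t < n \<Longrightarrow> q \<noteq> I!t \<Longrightarrow> \<exists>j<t. I!j = q \<Longrightarrow> pbit (take (Suc t) xs) q = p ! lst I t q"
proof -
  assume t: "t < n" and q: "q \<noteq> I!t" and ex: "\<exists>j<t. I!j = q"
  have lt: "lst I t q < t" using lst_props[OF ex] by simp
  show ?thesis unfolding pbit_def lidx_eq[OF t q] using lt t xs_nth[of "lst I t q"] by simp
qed

lemma L_absent: "q \<notin> L t' \<Longrightarrow> t' \<le> t \<Longrightarrow> (\<forall>j. t' \<le> j \<and> j < t \<longrightarrow> I!j \<noteq> q) \<Longrightarrow> q \<notin> L t"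
proof (induction t)
  case 0
  then show ?case by simp
next
  case (Suc t)
  show ?case
  proof (cases "t' = Suc t")
    case True
    then show ?thesis using Suc.prems by simp
  next
    case False
    hence "t' \<le> t" using Suc.prems by simp
    hence "q \<notin> L t" using Suc by simp
    moreover have "I!t \<noteq> q" using Suc.prems(3) \<open>t' \<le> t\<close> by blast
    hence "q \<noteq> I!t" by simp
    ultimately show ?thesis using L_sub[of t] by blast
  qed
qed

end

declare alg_cache.simps(2)[simp del] lfd_cache.simps(2)[simp del]

context pg2 begin

definition Wt where "Wt i t \<longleftrightarrow> i < t \<and> t < n \<and> I!t = I!i \<and> (\<forall>j. i < j \<and> j < t \<longrightarrow> I!j \<noteq> I!i)"

lemma Wt_uniq: "Wt i t1 \<Longrightarrow> Wt i t2 \<Longrightarrow> t1 = t2"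
  unfolding Wt_def by (metis linorder_neqE_nat)

lemma Wt_uniq2: "Wt i1 t \<Longrightarrow> Wt i2 t \<Longrightarrow> i1 = i2"
  unfolding Wt_def by (metis linorder_neqE_nat)

lemma forced_err: "s < n \<Longrightarrow> I!s \<notin> A s \<Longrightarrow> \<not> card (A s) < k \<Longrightarrow> \<exists>e\<in>A s. pstar tie k I (lst I s e)"
proof (rule ccontr)
  assume s: "s < n" and nin: "I!s \<notin> A s" and full: "\<not> card (A s) < k"
    and no: "\<not> (\<exists>e\<in>A s. pstar tie k I (lst I s e))"
  have inL: "q \<in> L s" if q: "q \<in> A s" for q
  proof -
    have ex: "\<exists>j<s. I!j = q" using A_req[of s q] s q by simp
    note lp = lst_props[OF ex]
    have nps: "\<not> pstar tie k I (lst I s q)" using no q by blast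
    show "q \<in> L s"
    proof (rule ccontr)
      assume "q \<notin> L s"
      hence "pstar tie k I (lst I s q)" unfolding pstar_def using lp s by (intro exI[of _ s]) auto
      with nps show False by simp
    qed
  qed
  have fA: "finite (A s)" using A_inv by blast
  have fL: "finite (L s)" "card (L s) \<le> k" using L_inv by auto
  have "A s \<subseteq> L s" using inL by blast
  hence eq: "A s = L s" using card_seteq[OF fL(1)] fL(2) full by simp
  let ?w = "tie I s (lfd_cands I s (L s))"
  have wL: "?w \<in> L s" using L_victim full eq by simp
  have Ls: "L (Suc s) = insert (I!s) (L s - {?w})" using L_step[of s] nin eq full by simp
  have wne: "?w \<noteq> I!s" using wL nin eq by auto
  have wout: "?w \<notin> L (Suc s)" using Ls wne by simp
  have wA: "?w \<in> A s" using wL eq by simp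
  have ex: "\<exists>j<s. I!j = ?w" using A_req[of s ?w] s wA by simp
  note lp = lst_props[OF ex]
  have "pstar tie k I (lst I s ?w)" unfolding pstar_def
  proof (intro exI[of _ "Suc s"] conjI)
    show "lst I s ?w < Suc s" using lp by simp
    show "Suc s \<le> length I" using s by simp
    show "I ! lst I s ?w \<notin> L (Suc s)" using lp wout by simp
    show "\<forall>j. lst I s ?w < j \<and> j < Suc s \<longrightarrow> I ! j \<noteq> I ! lst I s ?w"
      using lp wne by (auto simp: less_Suc_eq)
  qed
  thus False using no wA by blast
qed

definition Err0 where "Err0 = {i. i < length p \<and> p ! i = False \<and> pstar tie k I i = (\<not> False)}"

definition R where "R i s c \<longleftrightarrow> i < c \<and> c < s \<and> s < n \<and> I!i \<in> A s \<and> I!i \<notin> A (Suc s)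
   \<and> (\<forall>j. i < j \<and> j < s \<longrightarrow> I!j \<noteq> I!i) \<and> c \<in> Err0"

lemma E3_R: "Wt i t \<Longrightarrow> I!t \<notin> A t \<Longrightarrow> \<not> pstar tie k I i \<Longrightarrow> \<not> p!i \<Longrightarrow> \<exists>s c. R i s c"
proof -
  assume W: "Wt i t" and ft: "I!t \<notin> A t" and np: "\<not> pstar tie k I i" and nb: "\<not> p!i"
  have it: "i < t" "t < n" "I!t = I!i" "\<forall>j. i < j \<and> j < t \<longrightarrow> I!j \<noteq> I!i" using W unfolding Wt_def by auto
  have "I!i \<in> A (Suc i)" using A_has it by simp
  moreover have "I!i \<notin> A t" using ft it by simp
  ultimately obtain s where s: "Suc i \<le> s" "s < t" "I!i \<in> A s" "I!i \<notin> A (Suc s)"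
    using first_drop[of "\<lambda>s. I!i \<in> A s" "Suc i" t] it by auto
  have sn: "s < n" using s it by simp
  have nr: "\<forall>j. i < j \<and> j < s \<longrightarrow> I!j \<noteq> I!i" using it s by auto
  note ev = A_evict[OF sn s(3) s(4)]
  let ?h = "take (Suc s) xs"
  have fA: "finite (A s)" using A_inv by blast
  have neA: "A s \<noteq> {}" using s by auto
  have ine: "I!i \<noteq> I!s" using ev s by auto
  have lsti: "lst I s (I!i) = i" by (rule lst_eq) (use s nr in auto)
  have exi: "\<exists>j<s. I!j = I!i" using s(1) by (intro exI[of _ i]) simp
  have "pbit ?h (I!i) = p ! i" using pbit_eq[OF sn ine exi] lsti by simp
  hence "\<not> pbit ?h (mypol ?h (A s))" using ev nb by simp
  note lru = mypol_lru[OF fA neA this]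
  obtain e where e: "e \<in> A s" "pstar tie k I (lst I s e)" using forced_err[OF sn] ev by blast
  have ene: "e \<noteq> I!s" using e ev by auto
  have exe: "\<exists>j<s. I!j = e" using A_req[of s e] sn e by simp
  let ?c = "lst I s e"
  have bc: "\<not> p ! ?c" using lru e pbit_eq[OF sn ene exe] by auto
  have "lidx ?h (I!i) \<le> lidx ?h e" using lru e ev by auto
  hence "i \<le> ?c" using lidx_eq[OF sn ine] lidx_eq[OF sn ene] lsti by simp
  moreover have "?c \<noteq> i" using e np by auto
  ultimately have ic: "i < ?c" by simp
  have cs: "?c < s" using lst_props[OF exe] by simp
  have "?c \<in> Err0" unfolding Err0_def using cs sn len bc e by auto
  hence "R i s ?c" unfolding R_def using ic cs sn s nr by auto
  thus ?thesis by blast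
qed

definition chs where "chs i = (SOME sc. R i (fst sc) (snd sc))"

lemma chs_R: "\<exists>s c. R i s c \<Longrightarrow> R i (fst (chs i)) (snd (chs i))"
proof -
  assume "\<exists>s c. R i s c"
  then obtain s c where "R i s c" by blast
  hence "R i (fst (s, c)) (snd (s, c))" by simp
  thus ?thesis unfolding chs_def by (rule someI)
qed

definition Ob where "Ob c s = {q \<in> A s. \<forall>j. c \<le> j \<and> j < s \<longrightarrow> I!j \<noteq> q}"

lemma Ob_mono: "c \<le> s \<Longrightarrow> s < n \<Longrightarrow> Ob c (Suc s) \<subseteq> Ob c s"
proof
  fix q assume cs: "c \<le> s" "s < n" and q: "q \<in> Ob c (Suc s)"
  have "I!s \<noteq> q" using q cs unfolding Ob_def by auto
  hence "q \<in> A s" using q A_sub[OF cs(2)] unfolding Ob_def by auto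
  thus "q \<in> Ob c s" using q unfolding Ob_def by auto
qed

lemma Ob_start: "c < n \<Longrightarrow> card (Ob c (Suc c)) \<le> k - 1 \<and> finite (Ob c (Suc c))"
proof -
  assume c: "c < n"
  have sub: "Ob c (Suc c) \<subseteq> A (Suc c) - {I!c}" unfolding Ob_def by auto
  have f: "finite (A (Suc c))" "card (A (Suc c)) \<le> k" using A_inv[of "Suc c"] by auto
  have "card (A (Suc c) - {I!c}) = card (A (Suc c)) - 1" using A_has[OF c] f by simp
  moreover have "card (Ob c (Suc c)) \<le> card (A (Suc c) - {I!c})" using card_mono[OF _ sub] f by simp
  moreover have "finite (Ob c (Suc c))" using finite_subset[OF sub] f by simp
  ultimately show ?thesis using f by simp
qed

lemma G_bound: "c \<in> Err0 \<Longrightarrow> card {i \<in> E. snd (chs i) = c \<and> R i (fst (chs i)) (snd (chs i))} \<le> k - 1"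
proof -
  assume cE: "c \<in> Err0"
  have c: "c < n" using cE len unfolding Err0_def by simp
  let ?G = "{i \<in> E. snd (chs i) = c \<and> R i (fst (chs i)) (snd (chs i))}"
  let ?D = "{s. Suc c \<le> s \<and> s < n \<and> Ob c (Suc s) \<noteq> Ob c s}"
  note os = Ob_start[OF c]
  have "card ?D + card (Ob c n) \<le> card (Ob c (Suc c))"
    by (rule dec_count[of "Suc c" n "Ob c"]) (use Ob_mono os c in auto)
  hence D: "card ?D \<le> k - 1" using os by simp
  have fD: "finite ?D" by (rule finite_subset[of _ "{..<n}"]) auto
  have inj: "inj_on (\<lambda>i. fst (chs i)) ?G"
  proof (rule inj_onI)
    fix i i' assume i: "i \<in> ?G" and i': "i' \<in> ?G" and eq: "fst (chs i) = fst (chs i')"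
    let ?s = "fst (chs i)"
    have Ri: "R i ?s c" using i by auto
    have Ri': "R i' ?s c" using i' eq by auto
    have same: "I!i = I!i'" using A_one[of ?s "I!i" "I!i'"] Ri Ri' unfolding R_def by auto
    have a: "i < ?s" "i' < ?s" "\<forall>j. i<j \<and> j<?s \<longrightarrow> I!j \<noteq> I!i" "\<forall>j. i'<j \<and> j<?s \<longrightarrow> I!j \<noteq> I!i'"
      using Ri Ri' unfolding R_def by auto
    show "i = i'"
    proof (rule linorder_cases[of i i'])
      assume "i < i'"
      hence "I!i' \<noteq> I!i" using a(3) a(2) by blast
      thus ?thesis using same by simp
    next
      assume "i' < i"
      hence "I!i \<noteq> I!i'" using a(4) a(1) by blast
      thus ?thesis using same by simp
    qed
  qed
  have img: "(\<lambda>i. fst (chs i)) ` ?G \<subseteq> ?D"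
  proof
    fix s assume "s \<in> (\<lambda>i. fst (chs i)) ` ?G"
    then obtain i where i: "i \<in> ?G" and si: "s = fst (chs i)" by blast
    have Ri: "R i s c" using i si by auto
    have "I!i \<in> Ob c s" using Ri unfolding R_def Ob_def by auto
    moreover have "I!i \<notin> Ob c (Suc s)" using Ri unfolding R_def Ob_def by auto
    ultimately show "s \<in> ?D" using Ri unfolding R_def by auto
  qed
  have "card ?G \<le> card ?D" by (rule card_inj_on_le[OF inj img fD])
  thus ?thesis using D by simp
qed

end

context pg2 begin

definition FA where "FA = {t. t < n \<and> I!t \<notin> A t}"
definition FL where "FL = {t. t < n \<and> I!t \<notin> L t}"
definition Fi where "Fi = {t. t < n \<and> (\<forall>j<t. I!j \<noteq> I!t)}"
definition Ep where "Ep = {i. i < n \<and> (\<exists>t. Wt i t \<and> I!t \<notin> A t)}"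

lemma fin_lt: "S \<subseteq> {..<n} \<Longrightarrow> finite S"
  using finite_subset by blast

lemma S1: "card FA \<le> card Fi + card Ep"
proof -
  have fFi: "finite Fi" by (rule fin_lt) (auto simp: Fi_def)
  have fEp: "finite Ep" by (rule fin_lt) (auto simp: Ep_def)
  have fD: "finite (FA - Fi)" by (rule fin_lt) (auto simp: FA_def)
  have inj: "inj_on (\<lambda>t. lst I t (I!t)) (FA - Fi)"
  proof (rule inj_onI)
    fix t1 t2 assume t1: "t1 \<in> FA - Fi" and t2: "t2 \<in> FA - Fi" and eq: "lst I t1 (I!t1) = lst I t2 (I!t2)"
    have e1: "\<exists>j<t1. I!j = I!t1" using t1 by (auto simp: FA_def Fi_def)
    have e2: "\<exists>j<t2. I!j = I!t2" using t2 by (auto simp: FA_def Fi_def)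
    have "Wt (lst I t1 (I!t1)) t1" using lst_props[OF e1] t1 by (auto simp: Wt_def FA_def)
    moreover have "Wt (lst I t1 (I!t1)) t2" using lst_props[OF e2] t2 eq by (auto simp: Wt_def FA_def)
    ultimately show "t1 = t2" by (rule Wt_uniq)
  qed
  have img: "(\<lambda>t. lst I t (I!t)) ` (FA - Fi) \<subseteq> Ep"
  proof
    fix i assume "i \<in> (\<lambda>t. lst I t (I!t)) ` (FA - Fi)"
    then obtain t where t: "t \<in> FA - Fi" and it: "i = lst I t (I!t)" by blast
    have e: "\<exists>j<t. I!j = I!t" using t by (auto simp: FA_def Fi_def)
    have W: "Wt i t" using lst_props[OF e] t it by (auto simp: Wt_def FA_def)
    thus "i \<in> Ep" using t W unfolding Ep_def FA_def Wt_def by auto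
  qed
  have "card (FA - Fi) \<le> card Ep" by (rule card_inj_on_le[OF inj img fEp])
  moreover have "card FA \<le> card Fi + card (FA - Fi)"
  proof -
    have "FA \<subseteq> Fi \<union> (FA - Fi)" by blast
    hence "card FA \<le> card (Fi \<union> (FA - Fi))" using fFi fD by (intro card_mono) auto
    also have "\<dots> \<le> card Fi + card (FA - Fi)" by (rule card_Un_le)
    finally show ?thesis .
  qed
  ultimately show ?thesis by simp
qed

definition nx where "nx i = (LEAST t. i < t \<and> t < n \<and> I!t = I!i)"

lemma nx_eq: "Wt i t \<Longrightarrow> nx i = t"
  unfolding nx_def
proof (rule Least_equality)
  assume "Wt i t"
  then show "i < t \<and> t < n \<and> I!t = I!i" by (simp add: Wt_def)
next
  fix y assume W: "Wt i t" and y: "i < y \<and> y < n \<and> I!y = I!i"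
  show "t \<le> y"
  proof (rule ccontr)
    assume "\<not> t \<le> y"
    hence "y < t" by simp
    thus False using W y unfolding Wt_def by blast
  qed
qed

lemma S4: "Fi \<subseteq> FL"
proof
  fix t assume t: "t \<in> Fi"
  have "I!t \<notin> L t"
  proof
    assume "I!t \<in> L t"
    then obtain j where "j < t" "I!j = I!t" using L_req by blast
    thus False using t by (auto simp: Fi_def)
  qed
  thus "t \<in> FL" using t by (simp add: FL_def Fi_def)
qed

lemma S3: "card {i \<in> Ep. pstar tie k I i} \<le> card (FL - Fi)"
proof -
  let ?E1 = "{i \<in> Ep. pstar tie k I i}"
  have fD: "finite (FL - Fi)" by (rule fin_lt) (auto simp: FL_def)
  have W: "\<exists>t. Wt i t" if "i \<in> ?E1" for i using that by (auto simp: Ep_def)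
  have inj: "inj_on nx ?E1"
  proof (rule inj_onI)
    fix i1 i2 assume i1: "i1 \<in> ?E1" and i2: "i2 \<in> ?E1" and eq: "nx i1 = nx i2"
    obtain t1 where t1: "Wt i1 t1" using W[OF i1] by blast
    obtain t2 where t2: "Wt i2 t2" using W[OF i2] by blast
    have "t1 = t2" using nx_eq[OF t1] nx_eq[OF t2] eq by simp
    thus "i1 = i2" using Wt_uniq2 t1 t2 by blast
  qed
  have img: "nx ` ?E1 \<subseteq> FL - Fi"
  proof
    fix t assume "t \<in> nx ` ?E1"
    then obtain i where i: "i \<in> ?E1" and ti: "t = nx i" by blast
    obtain t0 where t0: "Wt i t0" using W[OF i] by blast
    have tt: "t = t0" using nx_eq[OF t0] ti by simp
    have Wi: "i < t" "t < n" "I!t = I!i" "\<forall>j. i < j \<and> j < t \<longrightarrow> I!j \<noteq> I!i" using t0 tt by (auto simp: Wt_def)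
    have "pstar tie k I i" using i by simp
    then obtain t' where t': "i < t'" "t' \<le> n" "I!i \<notin> L t'" "\<forall>j. i < j \<and> j < t' \<longrightarrow> I!j \<noteq> I!i"
      unfolding pstar_def by blast
    have "t' \<le> t"
    proof (rule ccontr)
      assume "\<not> t' \<le> t"
      hence "I!t \<noteq> I!i" using t'(4) Wi(1) by simp
      thus False using Wi(3) by simp
    qed
    have "\<forall>j. t' \<le> j \<and> j < t \<longrightarrow> I!j \<noteq> I!i" using Wi(4) t'(1) by auto
    hence "I!i \<notin> L t" using L_absent[OF t'(3) \<open>t' \<le> t\<close>] by blast
    hence "t \<in> FL" using Wi by (simp add: FL_def)
    moreover have "t \<notin> Fi" using Wi by (auto simp: Fi_def)
    ultimately show "t \<in> FL - Fi" by simp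
  qed
  show ?thesis by (rule card_inj_on_le[OF inj img fD])
qed

lemma S6: "card {i \<in> Ep. \<not> pstar tie k I i \<and> p!i} \<le> eta True p (pstar tie k I)"
proof -
  have sub: "{i \<in> Ep. \<not> pstar tie k I i \<and> p!i} \<subseteq> {i. i < length p \<and> p ! i = True \<and> pstar tie k I i = (\<not> True)}"
    using len by (auto simp: Ep_def)
  have fin: "finite {i. i < length p \<and> p ! i = True \<and> pstar tie k I i = (\<not> True)}"
    by (rule finite_subset[of _ "{..<length p}"]) auto
  show ?thesis unfolding eta_def by (rule card_mono[OF fin sub])
qed

lemma S7: "card {i \<in> Ep. \<not> pstar tie k I i \<and> \<not> p!i} \<le> (k - 1) * eta False p (pstar tie k I)"
proof -
  let ?E3 = "{i \<in> Ep. \<not> pstar tie k I i \<and> \<not> p!i}"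
  let ?G = "\<lambda>c. {i \<in> ?E3. snd (chs i) = c \<and> R i (fst (chs i)) (snd (chs i))}"
  have fErr: "finite Err0" by (rule fin_lt) (auto simp: Err0_def len)
  have sub: "?E3 \<subseteq> (\<Union>c\<in>Err0. ?G c)"
  proof
    fix i assume i: "i \<in> ?E3"
    then obtain t where "Wt i t" "I!t \<notin> A t" by (auto simp: Ep_def)
    hence "\<exists>s c. R i s c" using E3_R i by auto
    hence Ri: "R i (fst (chs i)) (snd (chs i))" by (rule chs_R)
    hence "snd (chs i) \<in> Err0" by (simp add: R_def)
    thus "i \<in> (\<Union>c\<in>Err0. ?G c)" using i Ri by blast
  qed
  have fG: "finite (?G c)" for c by (rule fin_lt) (auto simp: Ep_def)
  have "card ?E3 \<le> card (\<Union>c\<in>Err0. ?G c)" using sub fErr fG by (intro card_mono) auto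
  also have "\<dots> \<le> (\<Sum>c\<in>Err0. card (?G c))" by (rule card_UN_le[OF fErr])
  also have "\<dots> \<le> (\<Sum>c\<in>Err0. k - 1)" by (rule sum_mono) (rule G_bound)
  also have "\<dots> = (k - 1) * card Err0" by simp
  also have "card Err0 = eta False p (pstar tie k I)" by (simp add: Err0_def eta_def)
  finally show ?thesis .
qed

lemma main: "card FA \<le> card FL + (k - 1) * eta False p (pstar tie k I) + eta True p (pstar tie k I)"
proof -
  let ?E1 = "{i \<in> Ep. pstar tie k I i}"
  let ?E2 = "{i \<in> Ep. \<not> pstar tie k I i \<and> p!i}"
  let ?E3 = "{i \<in> Ep. \<not> pstar tie k I i \<and> \<not> p!i}"
  have eq: "Ep = (?E1 \<union> ?E2) \<union> ?E3" by blast
  have c0: "card Ep = card ((?E1 \<union> ?E2) \<union> ?E3)" by (rule arg_cong[OF eq])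
  have c1: "card ((?E1 \<union> ?E2) \<union> ?E3) \<le> card (?E1 \<union> ?E2) + card ?E3" by (rule card_Un_le)
  have c2: "card (?E1 \<union> ?E2) \<le> card ?E1 + card ?E2" by (rule card_Un_le)
  have "card Ep \<le> card ?E1 + card ?E2 + card ?E3" using c0 c1 c2 by linarith
  moreover have "card FL = card Fi + card (FL - Fi)"
  proof -
    have fFL: "finite FL" by (rule fin_lt) (auto simp: FL_def)
    have "card (FL - Fi) = card FL - card Fi" using S4 fFL by (simp add: card_Diff_subset finite_subset)
    moreover have "card Fi \<le> card FL" using S4 fFL by (simp add: card_mono)
    ultimately show ?thesis by simp
  qed
  ultimately show ?thesis using S1 S3 S6 S7 by linarith
qed

lemma alg_eq: "alg_cost mypol k xs = card FA"
proof -
  have "{t. t < length xs \<and> fst (xs ! t) \<notin> A t} = FA" using len xs_nth by (auto simp: FA_def)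
  thus ?thesis by (simp add: alg_cost_def)
qed

lemma FL_le: "card FL \<le> opt_cost k I"
proof -
  have "card {t'. 0 \<le> t' \<and> t' < n \<and> I!t' \<notin> L t'} \<le> V k I 0 (L 0)" by (rule L_opt) simp
  moreover have "{t'. 0 \<le> t' \<and> t' < n \<and> I!t' \<notin> L t'} = FL" by (auto simp: FL_def)
  ultimately have "card FL \<le> V k I 0 {}" by simp
  thus ?thesis using opt_lb[OF k1, of I] by simp
qed

end

theorem theorem1:
  fixes k :: nat and tie :: "'a list \<Rightarrow> nat \<Rightarrow> 'a set \<Rightarrow> 'a"
  assumes "k \<ge> 1"
    and "\<And>I i S. S \<noteq> {} \<Longrightarrow> finite S \<Longrightarrow> tie I i S \<in> S"
  shows "\<exists>(pol :: 'a policy) (b :: real). \<forall>(I :: 'a list) (p :: bool list).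
           length p = length I \<longrightarrow>
           real (alg_cost pol k (zip I p))
             \<le> real (opt_cost k I) + real (k - 1) * real (eta False p (pstar tie k I))
                + real (eta True p (pstar tie k I)) + b"
proof (intro exI[of _ mypol] exI[of _ 0] allI impI)
  fix I :: "'a list" and p :: "bool list"
  assume l: "length p = length I"
  interpret P: pg2 k tie I p
    by unfold_locales (use assms l in auto)
  have "alg_cost mypol k (zip I p) \<le> opt_cost k I + (k - 1) * eta False p (pstar tie k I) + eta True p (pstar tie k I)"
    using P.main P.alg_eq P.FL_le by linarith
  hence "real (alg_cost mypol k (zip I p)) \<le> real (opt_cost k I + (k - 1) * eta False p (pstar tie k I) + eta True p (pstar tie k I))"
    by (rule of_nat_mono)
  thus "real (alg_cost mypol k (zip I p))
             \<le> real (opt_cost k I) + real (k - 1) * real (eta False p (pstar tie k I))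
                + real (eta True p (pstar tie k I)) + 0" by simp
qed

end
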